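(* If $A\in\{0,1\}^{N\times n}$ is such that every row of $A$ has at most $k$ nonzero entries, then $\mathsf{m}^{rd}(2k+1,A)\ge(2n)^{-2k}(2k)^{-1/4}$.
   Context: For $A\in\{0,1\}^{N\times n}$ and $m\ge0$, unit vectors $U_1,\dots,U_N,V_1,\dots,V_n\in\mathbb{R}^d$ form a margin-$m$, relative-bias-$0$ embedding of $A$ in dimension $d$ if $\langle U_j,V_i\rangle\ge m$ whenever $A_{ji}=1$ and $\langle U_j,V_i\rangle\le -m$ whenever $A_{ji}=0$. $\mathsf{m}^{rd}(d,A)$ is the supremum of $m\ge0$ for which such an embedding exists in dimension $d$ ($-\infty$ if none exists). *)

theory Defs
  imports "HOL-Analysis.Analysis" "HOL-Library.Extended_Real"
begin

text \<open>Vectors in R^d are represented as functions nat => real, only the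
coordinates below d being relevant.\<close>

definition vinner :: "nat \<Rightarrow> (nat \<Rightarrow> real) \<Rightarrow> (nat \<Rightarrow> real) \<Rightarrow> real" where
  "vinner d x y = (\<Sum>t<d. x t * y t)"

definition unit_vec :: "nat \<Rightarrow> (nat \<Rightarrow> real) \<Rightarrow> bool" where
  "unit_vec d x \<longleftrightarrow> vinner d x x = 1"

definition rd_embedding ::
  "nat \<Rightarrow> nat \<Rightarrow> nat \<Rightarrow> (nat \<Rightarrow> nat \<Rightarrow> int) \<Rightarrow> real
     \<Rightarrow> (nat \<Rightarrow> nat \<Rightarrow> real) \<Rightarrow> (nat \<Rightarrow> nat \<Rightarrow> real) \<Rightarrow> bool" where
  "rd_embedding d N n A m U V \<longleftrightarrow>
     (\<forall>j<N. unit_vec d (U j)) \<and> (\<forall>i<n. unit_vec d (V i)) \<and>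
     (\<forall>j<N. \<forall>i<n. (A j i = 1 \<longrightarrow> vinner d (U j) (V i) \<ge> m) \<and>
                   (A j i = 0 \<longrightarrow> vinner d (U j) (V i) \<le> - m))"

definition margins_rd :: "nat \<Rightarrow> nat \<Rightarrow> nat \<Rightarrow> (nat \<Rightarrow> nat \<Rightarrow> int) \<Rightarrow> real set" where
  "margins_rd d N n A = {m. m \<ge> 0 \<and> (\<exists>U V. rd_embedding d N n A m U V)}"

definition mrd :: "nat \<Rightarrow> nat \<Rightarrow> nat \<Rightarrow> (nat \<Rightarrow> nat \<Rightarrow> int) \<Rightarrow> ereal" where
  "mrd d N n A = (if margins_rd d N n A = {} then -\<infinity> else Sup (ereal ` margins_rd d N n A))"

end

theory Submission
  imports Defs "HOL-Computational_Algebra.Polynomial"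
begin


definition l1p :: "real poly \<Rightarrow> real" where
  "l1p p = (\<Sum>i\<le>degree p. \<bar>coeff p i\<bar>)"

lemma l1p_eq: "degree p \<le> D \<Longrightarrow> l1p p = (\<Sum>i\<le>D. \<bar>coeff p i\<bar>)"
  unfolding l1p_def
  by (rule sum.mono_neutral_left) (auto simp: coeff_eq_0)

lemma l1p_nonneg: "l1p p \<ge> 0"
  unfolding l1p_def by (auto intro: sum_nonneg)

lemma l1p_add: "l1p (p + q) \<le> l1p p + l1p q"
proof -
  let ?D = "max (degree p) (degree q)"
  have "l1p (p + q) = (\<Sum>i\<le>?D. \<bar>coeff p i + coeff q i\<bar>)"
    using l1p_eq[of "p+q" ?D] degree_add_le[of p ?D q] by simp
  also have "\<dots> \<le> (\<Sum>i\<le>?D. \<bar>coeff p i\<bar> + \<bar>coeff q i\<bar>)"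
    by (rule sum_mono) (rule abs_triangle_ineq)
  also have "\<dots> = l1p p + l1p q"
    by (simp add: sum.distrib l1p_eq[of p ?D] l1p_eq[of q ?D])
  finally show ?thesis .
qed

lemma l1p_uminus: "l1p (- p) = l1p p"
  unfolding l1p_def by simp

lemma l1p_smult: "l1p (smult a p) = \<bar>a\<bar> * l1p p"
  using l1p_eq[of "smult a p" "degree p"] degree_smult_le[of a p]
  by (simp add: l1p_def sum_distrib_left abs_mult)

lemma l1p_pCons: "l1p (pCons a p) = \<bar>a\<bar> + l1p p"
proof -
  have "l1p (pCons a p) = (\<Sum>i\<le>Suc (degree p). \<bar>coeff (pCons a p) i\<bar>)"
    by (rule l1p_eq) (simp add: degree_pCons_le)
  also have "\<dots> = \<bar>a\<bar> + (\<Sum>i\<le>degree p. \<bar>coeff p i\<bar>)"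
    by (subst sum.atMost_Suc_shift) simp
  finally show ?thesis by (simp add: l1p_def)
qed

lemma l1p_mult: "l1p (p * q) \<le> l1p p * l1p q"
proof (induction p rule: pCons_induct)
  case 0
  then show ?case by (simp add: l1p_def)
next
  case (pCons a p)
  have "l1p (pCons a p * q) \<le> l1p (smult a q) + l1p (pCons 0 (p * q))"
    by (simp add: l1p_add)
  also have "\<dots> = \<bar>a\<bar> * l1p q + l1p (p * q)"
    by (simp add: l1p_smult l1p_pCons)
  also have "\<dots> \<le> \<bar>a\<bar> * l1p q + l1p p * l1p q"
    using pCons.IH by simp
  also have "\<dots> = l1p (pCons a p) * l1p q"
    by (simp add: l1p_pCons algebra_simps)
  finally show ?case .
qed

lemma l1p_const: "l1p [:c:] = \<bar>c\<bar>"
  by (simp add: l1p_def)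

lemma l1p_prod: "finite S \<Longrightarrow> l1p (\<Prod>i\<in>S. f i) \<le> (\<Prod>i\<in>S. l1p (f i))"
proof (induction S rule: finite_induct)
  case empty
  then show ?case by (simp add: l1p_def)
next
  case (insert x F)
  have "l1p (\<Prod>i\<in>insert x F. f i) = l1p (f x * (\<Prod>i\<in>F. f i))" using insert by simp
  also have "\<dots> \<le> l1p (f x) * l1p (\<Prod>i\<in>F. f i)" by (rule l1p_mult)
  also have "\<dots> \<le> l1p (f x) * (\<Prod>i\<in>F. l1p (f i))"
    using insert.IH l1p_nonneg by (simp add: mult_left_mono)
  finally show ?case using insert by simp
qed

lemma poly_lessThan: fixes p :: "real poly" assumes "degree p < D" shows "poly p x = (\<Sum>l<D. coeff p l * x ^ l)"
proof -
  have "(\<Sum>l<D. coeff p l * x ^ l) = (\<Sum>l\<le>degree p. coeff p l * x ^ l)"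
    by (rule sum.mono_neutral_right) (use assms in \<open>auto simp: coeff_eq_0\<close>)
  then show ?thesis using Polynomial.poly_altdef[of p x] by simp
qed


lemma pow16: "k \<ge> 1 \<Longrightarrow> 81 * (2 * k + 1) \<le> 16 * (16::nat) ^ k"
proof (induction k rule: dec_induct)
  case base
  then show ?case by simp
next
  case (step m)
  then show ?case by simp
qed

lemma m0_bound:
  fixes k :: nat and X :: real
  assumes "k \<ge> 1" "X \<ge> 4"
  shows "(1 + 2 * X) * sqrt (2 * real k + 1) \<le> 4 ^ k * X"
proof -
  have "real (81 * (2 * k + 1)) \<le> real (16 * 16 ^ k)" using pow16[OF assms(1)] by linarith
  hence h: "2 * real k + 1 \<le> (4/9 * 4 ^ k)^2"
    by (simp add: power_mult_distrib power2_eq_square flip: power_mult_distrib)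
  have s: "sqrt (2 * real k + 1) \<le> 4/9 * 4 ^ k"
    using h by (intro real_le_lsqrt) auto
  have "(1 + 2 * X) * sqrt (2 * real k + 1) \<le> (9/4 * X) * (4/9 * 4 ^ k)"
    using s assms by (intro mult_mono) auto
  also have "\<dots> = 4 ^ k * X" by simp
  finally show ?thesis .
qed

lemma T_le:
  fixes n k :: nat
  assumes "n \<ge> 1" "k \<ge> 1"
  shows "(2 * real n) powr (- (2 * real k)) * (2 * real k) powr (- 1 / 4) \<le> 1 / (2 * real n) ^ (2 * k)"
proof -
  have a: "(2 * real n) powr (- (2 * real k)) = 1 / (2 * real n) ^ (2 * k)"
  proof -
    have "(2 * real n) powr (2 * real k) = (2 * real n) ^ (2 * k)"
      using assms by (subst powr_realpow[symmetric]) auto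
    thus ?thesis by (simp add: powr_minus_divide divide_le_eq)
  qed
  have b: "(2 * real k) powr (- 1 / 4) \<le> 1"
  proof -
    have "1 \<le> (2 * real k) powr (1 / 4)" using assms by (intro ge_one_powr_ge_zero) auto
    thus ?thesis by (simp add: powr_minus_divide divide_le_eq)
  qed
  show ?thesis unfolding a using b assms
    by (intro mult_left_le) auto
qed

lemma mrd_ge:
  assumes "rd_embedding d N n A m U V" "m \<ge> 0" "T \<le> m"
  shows "mrd d N n A \<ge> ereal T"
proof -
  have "m \<in> margins_rd d N n A" using assms unfolding margins_rd_def by auto
  hence "ereal m \<le> Sup (ereal ` margins_rd d N n A)" by (intro Sup_upper) auto
  moreover have "margins_rd d N n A \<noteq> {}" using \<open>m \<in> margins_rd d N n A\<close> by auto
  ultimately show ?thesis using assms unfolding mrd_def using order_trans[of "ereal T" "ereal m"] by simp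
qed

lemma aux: fixes FF ss XX :: real assumes "FF > 0" "ss > 0" "XX > 0"
  shows "(FF/(2* XX)) / ((FF/(2* XX) + FF) * ss) = 1/((1+2* XX)* ss)"
proof -
  define aa where "aa = FF/(2* XX)"
  have a0: "aa \<noteq> 0" using assms by (simp add: aa_def)
  have "aa + FF = aa * (1 + 2* XX)" using assms by (simp add: aa_def field_simps)
  hence "aa / ((aa + FF) * ss) = aa / (aa * ((1 + 2* XX) * ss))" by (simp add: mult.assoc)
  also have "\<dots> = 1/((1+2* XX)* ss)" using a0 by simp
  finally show ?thesis unfolding aa_def .
qed


lemma n1_case:
  fixes N k :: nat and A :: "nat \<Rightarrow> nat \<Rightarrow> int"
  assumes "k \<ge> 1" and "\<forall>j<N. \<forall>i<1. A j i \<in> {0, 1}"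
  shows "mrd (2 * k + 1) N 1 A \<ge>
           ereal ((2 * real 1) powr (- (2 * real k)) * (2 * real k) powr (- 1 / 4))"
proof -
  define U where "U = (\<lambda>j (l::nat). if l = 0 then (if A j 0 = 1 then 1 else -1) else (0::real))"
  define V where "V = (\<lambda>(i::nat) (l::nat). if l = 0 then 1 else (0::real))"
  have vi: "vinner (2 * k + 1) f g = f 0 * g 0" if "\<forall>l>0. g l = 0" for f g
  proof -
    have "vinner (2 * k + 1) f g = (\<Sum>l\<in>{0}. f l * g l)"
      unfolding vinner_def by (rule sum.mono_neutral_right) (use that in auto)
    thus ?thesis by simp
  qed
  have vu: "vinner (2 * k + 1) (U j) (U j) = 1" for j
    using vi[of "U j" "U j"] by (simp add: U_def)
  have emb: "rd_embedding (2 * k + 1) N 1 A 1 U V"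
    unfolding rd_embedding_def unit_vec_def
    using vi assms(2) by (auto simp: vu V_def U_def)
  have "(2 * real 1) powr (- (2 * real k)) * (2 * real k) powr (- 1 / 4) \<le> 1 / (2 * real 1) ^ (2 * k)"
    by (rule T_le) (use assms in auto)
  also have "\<dots> \<le> 1" by simp
  finally show ?thesis by (intro mrd_ge[OF emb]) auto
qed


lemma main_case:
  fixes N n k :: nat and A :: "nat \<Rightarrow> nat \<Rightarrow> int"
  assumes n2: "n \<ge> 2" and k1: "k \<ge> 1"
    and A01: "\<forall>j<N. \<forall>i<n. A j i \<in> {0, 1}"
    and rows: "\<forall>j<N. card {i. i < n \<and> A j i \<noteq> 0} \<le> k"
  shows "mrd (2 * k + 1) N n A \<ge>
           ereal ((2 * real n) powr (- (2 * real k)) * (2 * real k) powr (- 1 / 4))"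
proof -
  define d where "d = 2 * k + 1"
  define t where "t = (\<lambda>i::nat. -1 + 2 * real i / real n)"
  define S where "S = (\<lambda>j. {i. i < n \<and> A j i \<noteq> 0})"
  define c :: real where "c = (2 / real n) ^ (2 * k) / 2"
  define q where "q = (\<lambda>j. \<Prod>i\<in>S j. [:- t i, 1:])"
  define p where "p = (\<lambda>j. [:c:] - ((q j)^2))"
  define nU where "nU = (\<lambda>j. sqrt (\<Sum>l<d. (coeff (p j) l)^2))"
  define nV where "nV = (\<lambda>i. sqrt (\<Sum>l<d. (t i ^ l)^2))"
  define U where "U = (\<lambda>j l. coeff (p j) l / nU j)"
  define V where "V = (\<lambda>i l. t i ^ l / nV i)"
  define m0 where "m0 = c / ((c + 4 ^ k) * sqrt d)"
  have nr: "real n \<ge> 2" using n2 by simp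
  have finS: "finite (S j)" for j unfolding S_def by auto
  have cardS: "card (S j) \<le> k" if "j < N" for j using rows that unfolding S_def by auto
  have c_pos: "c > 0" unfolding c_def using nr by simp
  have tb: "\<bar>t i\<bar> \<le> 1" if "i < n" for i
    using that nr unfolding t_def by (auto simp: field_simps)
  have degq: "degree (q j) \<le> card (S j)" for j
  proof -
    have "degree (q j) \<le> sum (degree \<circ> (\<lambda>i. [:- t i, 1:])) (S j)"
      unfolding q_def by (rule degree_prod_sum_le[OF finS])
    thus ?thesis by simp
  qed
  have degp: "degree (p j) < d" if "j < N" for j
  proof -
    have "degree ((q j)^2) \<le> 2 * k"
      using degree_power_le[of "q j" 2] degq[of j] cardS[OF that] by linarith
    hence "degree (p j) \<le> 2 * k" unfolding p_def by (intro degree_diff_le) auto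
    thus ?thesis unfolding d_def by simp
  qed
  have l1q: "l1p (q j) \<le> 2 ^ k" if "j < N" for j
  proof -
    have "l1p (q j) \<le> (\<Prod>i\<in>S j. l1p [:- t i, 1:])" unfolding q_def by (rule l1p_prod[OF finS])
    also have "\<dots> \<le> (\<Prod>i\<in>S j. 2)"
    proof (rule prod_mono)
      fix i assume "i \<in> S j"
      hence "i < n" unfolding S_def by auto
      thus "0 \<le> l1p [:- t i, 1:] \<and> l1p [:- t i, 1:] \<le> 2"
        using tb[of i] by (simp add: l1p_pCons l1p_const l1p_def)
    qed
    also have "\<dots> = 2 ^ card (S j)" by simp
    also have "\<dots> \<le> 2 ^ k" using cardS[OF that] by (intro power_increasing) auto
    finally show ?thesis .
  qed
  have l1pp: "l1p (p j) \<le> c + 4 ^ k" if "j < N" for j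
  proof -
    have "l1p (p j) \<le> l1p [:c:] + l1p (- ((q j)^2))"
      unfolding p_def using l1p_add[of "[:c:]" "- ((q j)^2)"] by simp
    also have "\<dots> = c + l1p ((q j) * (q j))"
      using c_pos by (simp add: l1p_const l1p_uminus power2_eq_square)
    also have "\<dots> \<le> c + l1p (q j) * l1p (q j)" using l1p_mult by simp
    also have "\<dots> \<le> c + 2 ^ k * 2 ^ k"
      using l1q[OF that] l1p_nonneg[of "q j"] by (intro add_left_mono mult_mono) auto
    also have "\<dots> = c + 4 ^ k" by (simp flip: power_mult_distrib)
    finally show ?thesis .
  qed
  have nUle: "nU j \<le> c + 4 ^ k" if "j < N" for j
  proof -
    have "nU j = L2_set (coeff (p j)) {..<d}" unfolding nU_def L2_set_def by simp
    also have "\<dots> \<le> (\<Sum>l<d. \<bar>coeff (p j) l\<bar>)" by (rule L2_set_le_sum_abs)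
    also have "\<dots> = l1p (p j)"
    proof -
      have "{..<d} = {..2*k}" unfolding d_def by auto
      thus ?thesis using l1p_eq[of "p j" "2*k"] degp[OF that] unfolding d_def by simp
    qed
    finally show ?thesis using l1pp[OF that] by simp
  qed
  have nVpos: "nV i \<ge> 1" for i
  proof -
    have "(\<Sum>l\<in>{0}. (t i ^ l)^2) \<le> (\<Sum>l<d. (t i ^ l)^2)"
      by (rule sum_mono2) (auto simp: d_def)
    thus ?thesis unfolding nV_def by simp
  qed
  have nVle: "nV i \<le> sqrt d" if "i < n" for i
  proof -
    have "(\<Sum>l<d. (t i ^ l)^2) \<le> (\<Sum>l<d. 1)"
    proof (rule sum_mono)
      fix l
      have "\<bar>t i ^ l\<bar> \<le> 1" using tb[OF that] by (simp add: power_abs power_le_one)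
      thus "(t i ^ l)^2 \<le> 1" by (metis abs_ge_zero abs_le_square_iff power_le_one power2_abs)
    qed
    thus ?thesis unfolding nV_def by simp
  qed
  have polyeq: "poly (p j) (t i) = (\<Sum>l<d. coeff (p j) l * t i ^ l)" if "j < N" for i j
    by (rule poly_lessThan[OF degp[OF that]])
  have polyS: "poly (p j) (t i) = c" if "i \<in> S j" for i j
  proof -
    have "poly (q j) (t i) = 0" unfolding q_def poly_prod using that finS
      by (auto intro!: prod_zero bexI[where x=i])
    thus ?thesis unfolding p_def by simp
  qed
  have polyN: "poly (p j) (t i) \<le> - c" if "i \<notin> S j" "i < n" "j < N" for i j
  proof -
    have "(2 / real n) ^ card (S j) \<le> \<bar>poly (q j) (t i)\<bar>"
    proof -
      have "\<bar>poly (q j) (t i)\<bar> = (\<Prod>a\<in>S j. \<bar>t i - t a\<bar>)"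
        unfolding q_def poly_prod by (simp add: abs_prod)
      also have "\<dots> \<ge> (\<Prod>a\<in>S j. 2 / real n)"
      proof (rule prod_mono)
        fix a assume "a \<in> S j"
        hence "a \<noteq> i" using that by auto
        hence "1 \<le> \<bar>real i - real a\<bar>" by linarith
        moreover have "\<bar>t i - t a\<bar> = 2 * \<bar>real i - real a\<bar> / real n"
        proof -
          have "t i - t a = 2 * (real i - real a) / real n" unfolding t_def using nr by (simp add: field_simps)
          hence "\<bar>t i - t a\<bar> = \<bar>2 * (real i - real a)\<bar> / \<bar>real n\<bar>" by (simp only: abs_divide)
          also have "\<dots> = 2 * \<bar>real i - real a\<bar> / real n" by (simp only: abs_mult abs_numeral abs_of_nat)
          finally show ?thesis .
        qed
        ultimately show "0 \<le> 2 / real n \<and> 2 / real n \<le> \<bar>t i - t a\<bar>"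
          using nr by (simp add: divide_right_mono)
      qed
      finally show ?thesis by simp
    qed
    hence "((2 / real n) ^ card (S j))^2 \<le> (poly (q j) (t i))^2"
    proof -
      have "((2 / real n) ^ card (S j))^2 \<le> \<bar>poly (q j) (t i)\<bar>^2"
        by (rule power_mono[OF \<open>(2 / real n) ^ card (S j) \<le> \<bar>poly (q j) (t i)\<bar>\<close>]) (use nr in simp)
      thus ?thesis by simp
    qed
    moreover have "(2 / real n) ^ (2 * k) \<le> ((2 / real n) ^ card (S j))^2"
    proof -
      have "(2 / real n) ^ (2 * k) \<le> (2 / real n) ^ (2 * card (S j))"
        using cardS[OF that(3)] nr by (intro power_decreasing) auto
      thus ?thesis by (simp add: power_mult[symmetric] mult.commute)
    qed
    ultimately have "(2 / real n) ^ (2 * k) \<le> (poly (q j) (t i))^2" by linarith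
    thus ?thesis unfolding p_def c_def by simp
  qed
  have nUpos: "nU j > 0" if "j < N" for j
  proof (rule ccontr)
    assume "\<not> nU j > 0"
    moreover have "(\<Sum>l<d. (coeff (p j) l)^2) \<ge> 0" by (intro sum_nonneg) auto
    ultimately have "(\<Sum>l<d. (coeff (p j) l)^2) = 0" unfolding nU_def by simp
    hence "\<forall>l\<in>{..<d}. (coeff (p j) l)^2 = 0" by (subst (asm) sum_nonneg_eq_0_iff) auto
    hence "poly (p j) (t 0) = 0" using polyeq[OF that, of 0] by simp
    moreover have "poly (p j) (t 0) \<noteq> 0"
      using polyS[of 0 j] polyN[of 0 j] c_pos that n2 by (cases "0 \<in> S j") auto
    ultimately show False by simp
  qed
  have vUV: "vinner d (U j) (V i) = poly (p j) (t i) / (nU j * nV i)" if "j < N" for i j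
    unfolding vinner_def U_def V_def polyeq[OF that] sum_divide_distrib
    by (rule sum.cong) auto
  have uU: "unit_vec d (U j)" if "j < N" for j
  proof -
    have "vinner d (U j) (U j) = (\<Sum>l<d. (coeff (p j) l)^2) / (nU j)^2"
      unfolding vinner_def U_def sum_divide_distrib by (rule sum.cong) (auto simp: power2_eq_square)
    also have "\<dots> = 1" using nUpos[OF that] unfolding nU_def
      by (simp add: sum_nonneg)
    finally show ?thesis unfolding unit_vec_def .
  qed
  have uV: "unit_vec d (V i)" for i
  proof -
    have "vinner d (V i) (V i) = (\<Sum>l<d. (t i ^ l)^2) / (nV i)^2"
      unfolding vinner_def V_def sum_divide_distrib by (rule sum.cong) (auto simp: power2_eq_square)
    also have "\<dots> = 1" using nVpos[of i] unfolding nV_def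
      by (simp add: sum_nonneg)
    finally show ?thesis unfolding unit_vec_def .
  qed
  have den: "0 < nU j * nV i \<and> nU j * nV i \<le> (c + 4 ^ k) * sqrt d" if "j < N" "i < n" for i j
    using nUpos[OF that(1)] nVpos[of i] nUle[OF that(1)] nVle[OF that(2)]
    by (auto intro: mult_mono mult_pos_pos)
  have m0pos: "m0 > 0" unfolding m0_def using c_pos by (intro divide_pos_pos mult_pos_pos add_pos_pos) (auto simp: d_def)
  have emb: "rd_embedding d N n A m0 U V"
    unfolding rd_embedding_def
  proof (intro conjI allI impI)
    fix j i assume ji: "j < N" "i < n"
    have dpos: "0 < nU j * nV i" and dle: "nU j * nV i \<le> (c + 4 ^ k) * sqrt d"
      using den[OF ji] by auto
    have key: "m0 \<le> c / (nU j * nV i)"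
      unfolding m0_def using dpos dle c_pos by (intro divide_left_mono) auto
    {
      assume "A j i = 1"
      hence "i \<in> S j" using ji unfolding S_def by auto
      thus "m0 \<le> vinner d (U j) (V i)" using key vUV[OF ji(1)] polyS by simp
    }
    {
      assume "A j i = 0"
      hence "i \<notin> S j" unfolding S_def by auto
      hence "poly (p j) (t i) \<le> - c" using polyN ji by auto
      hence "poly (p j) (t i) / (nU j * nV i) \<le> - c / (nU j * nV i)"
        using dpos by (intro divide_right_mono) auto
      thus "vinner d (U j) (V i) \<le> - m0" using key vUV[OF ji(1)] by simp
    }
  qed (use uU uV in auto)
  have "(2 * real n) powr (- (2 * real k)) * (2 * real k) powr (- 1 / 4) \<le> 1 / (2 * real n) ^ (2 * k)"
    by (rule T_le) (use n2 k1 in auto)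
  also have "\<dots> \<le> m0"
  proof -
    define X where "X = real n ^ (2 * k)"
    have X4: "X \<ge> 4"
    proof -
      have "(2::real) ^ 2 \<le> 2 ^ (2 * k)" using k1 by (intro power_increasing) auto
      also have "\<dots> \<le> real n ^ (2 * k)" using nr by (intro power_mono) auto
      finally show ?thesis unfolding X_def by simp
    qed
    have ceq: "c = 4 ^ k / (2 * X)"
      unfolding c_def X_def by (simp add: power_divide power_mult)
    have m0eq: "m0 = 1 / ((1 + 2 * X) * sqrt d)"
    proof -
      have F: "(4::real) ^ k > 0" by simp
      have sd: "sqrt (real d) > 0" by (simp add: d_def)
      show ?thesis unfolding m0_def ceq using aux[OF F sd, of X] X4 by simp
    qed
    have lhs: "1 / (2 * real n) ^ (2 * k) = 1 / (4 ^ k * X)"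
      unfolding X_def by (simp add: power_mult_distrib power_mult)
    have "(1 + 2 * X) * sqrt (2 * real k + 1) \<le> 4 ^ k * X" by (rule m0_bound[OF k1 X4])
    hence "(1 + 2 * X) * sqrt d \<le> 4 ^ k * X" unfolding d_def by (simp add: add.commute)
    moreover have "0 < (1 + 2 * X) * sqrt d" using X4 by (simp add: d_def)
    ultimately show ?thesis unfolding lhs m0eq by (intro divide_left_mono) auto
  qed
  finally have "(2 * real n) powr (- (2 * real k)) * (2 * real k) powr (- 1 / 4) \<le> m0" .
  thus ?thesis using mrd_ge[OF emb] m0pos unfolding d_def by auto
qed


theorem corollary1p2:
  fixes N n k :: nat and A :: "nat \<Rightarrow> nat \<Rightarrow> int"
  assumes "n \<ge> 1" and "k \<ge> 1"
    and "\<forall>j<N. \<forall>i<n. A j i \<in> {0, 1}"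
    and "\<forall>j<N. card {i. i < n \<and> A j i \<noteq> 0} \<le> k"
  shows "mrd (2 * k + 1) N n A \<ge>
           ereal ((2 * real n) powr (- (2 * real k)) * (2 * real k) powr (- 1 / 4))"
proof (cases "n = 1")
  case True
  then show ?thesis using n1_case[of k N A] assms by simp
next
  case False
  then show ?thesis using main_case[of n k N A] assms by simp
qed

end
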